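(* Let $f: \mathbb{R}^n \to \mathbb{R}^n$ be a convex topical function. Then $\mathcal{G}(f)$ is identical to the syntactic graph $\mathcal{G}_s(f)$.
   Context: $f$ is topical if $f(x+h) = f(x)+h$ for all $h\in\mathbb{R}$ (scalar added to each coordinate) and $x\le y$ componentwise implies $f(x)\le f(y)$. $f$ is convex if each component $f_i$ is convex. $\mathcal{G}(f)$ is the directed graph on $\{1,\dots,n\}$ with an edge $i\to j$ iff $\lim_{u\to\infty} f_i(u e_{\{j\}}) = \infty$, $e_{\{j\}}$ being the $j$-th standard basis vector. $\mathcal{G}_s(f)$ is the directed graph on $\{1,\dots,n\}$ with an edge $i\to j$ iff $f_i$ depends on $x_j$, i.e. there is no $h: \mathbb{R}^{n-1}\to\mathbb{R}$ with $f_i(x) = h(x_1,\dots,x_{j-1},x_{j+1},\dots,x_n)$ for all $x$. *)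

theory Defs
  imports "HOL-Analysis.Analysis" "HOL-Library.FuncSet"
begin

definition topical :: "(real^'n \<Rightarrow> real^'n) \<Rightarrow> bool" where
  "topical f \<longleftrightarrow>
     (\<forall>x h. f (x + (\<chi> i. h)) = f x + (\<chi> i. h)) \<and>
     (\<forall>x y. (\<forall>i. x $ i \<le> y $ i) \<longrightarrow> (\<forall>i. f x $ i \<le> f y $ i))"

definition convex_map :: "(real^'n \<Rightarrow> real^'n) \<Rightarrow> bool" where
  "convex_map f \<longleftrightarrow> (\<forall>i. convex_on UNIV (\<lambda>x. f x $ i))"

definition graph_G :: "(real^'n \<Rightarrow> real^'n) \<Rightarrow> ('n \<times> 'n) set" where
  "graph_G f = {(i, j). filterlim (\<lambda>u::real. f (u *\<^sub>R axis j 1) $ i) at_top at_top}"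

text \<open>Edge set of the syntactic graph G_s(f): (i,j) is an edge iff f_i depends on x_j,
  i.e. f_i is not a function of the remaining coordinates (x_k)_{k \<noteq> j}.\<close>
definition graph_Gs :: "(real^'n \<Rightarrow> real^'n) \<Rightarrow> ('n \<times> 'n) set" where
  "graph_Gs f = {(i, j). \<not> (\<exists>h :: ('n \<Rightarrow> real) \<Rightarrow> real.
        \<forall>x. f x $ i = h (restrict (\<lambda>k. x $ k) (- {j})))}"

end

theory Submission
  imports Defs
begin

lemma cvx_mono_bdd_const:
  fixes \<phi> :: "real \<Rightarrow> real"
  assumes cv: "convex_on UNIV \<phi>" and mo: "mono \<phi>" and bd: "\<And>u. \<phi> u \<le> M"
  shows "\<phi> a = \<phi> b"
proof -
  have key: "\<phi> a = \<phi> b" if ab: "a < b" for a b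
  proof (rule ccontr)
    assume ne: "\<phi> a \<noteq> \<phi> b"
    have le: "\<phi> a \<le> \<phi> b" using mo ab by (simp add: monoD)
    hence lt: "\<phi> a < \<phi> b" using ne by simp
    define s where "s = (\<phi> b - \<phi> a) / (b - a)"
    have s0: "s > 0" using lt ab by (simp add: s_def)
    have Mb: "\<phi> b \<le> M" by (rule bd)
    define u where "u = b + (M - \<phi> a + 1) / s"
    have ub: "u > b" using s0 Mb lt by (simp add: u_def)
    have "(\<phi> a - \<phi> b) / (a - b) \<le> (\<phi> a - \<phi> u) / (a - u)"
      using convex_on_slope_le(1)[OF cv _ _ ab ub] by simp
    hence "s \<le> (\<phi> u - \<phi> a) / (u - a)" unfolding s_def
      by (smt (verit, ccfv_threshold) minus_divide_divide)
    hence "s * (u - a) \<le> \<phi> u - \<phi> a" using ub ab by (simp add: field_simps)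
    moreover have "s * (u - b) = M - \<phi> a + 1" using s0 by (simp add: u_def)
    moreover have "s * (u - a) \<ge> s * (u - b)" using s0 ab by (simp add: mult_left_mono)
    ultimately have "\<phi> u \<ge> M + 1" by linarith
    with bd[of u] show False by linarith
  qed
  show ?thesis
    by (cases a b rule: linorder_cases) (auto dest: key)
qed

lemma convex_line:
  fixes g :: "real^'n \<Rightarrow> real"
  assumes "convex_on UNIV g"
  shows "convex_on UNIV (\<lambda>t. g (x + t *\<^sub>R v))"
proof (rule convex_onI)
  fix t a b :: real assume t: "0 < t" "t < 1"
  have "x + ((1 - t) *\<^sub>R a + t *\<^sub>R b) *\<^sub>R v = (1 - t) *\<^sub>R (x + a *\<^sub>R v) + t *\<^sub>R (x + b *\<^sub>R v)"
    by (simp add: algebra_simps)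
  then show "g (x + ((1 - t) *\<^sub>R a + t *\<^sub>R b) *\<^sub>R v) \<le> (1 - t) * g (x + a *\<^sub>R v) + t * g (x + b *\<^sub>R v)"
    using convex_onD[OF assms, of t "x + a *\<^sub>R v" "x + b *\<^sub>R v"] t by simp
qed simp

theorem proposition3p3:
  fixes f :: "real^'n \<Rightarrow> real^'n"
  assumes "topical f" and "convex_map f"
  shows "graph_G f = graph_Gs f"
proof -
  have hom: "\<And>x h. f (x + (\<chi> i. h)) = f x + (\<chi> i. h)"
    and mon: "\<And>x y i. (\<forall>i. x $ i \<le> y $ i) \<Longrightarrow> f x $ i \<le> f y $ i"
    using assms(1) unfolding topical_def by blast+
  have cvx: "\<And>i. convex_on UNIV (\<lambda>x. f x $ i)" using assms(2) unfolding convex_map_def by blast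
  have ax: "\<And>j k. axis j (1::real) $ k = (if k = j then 1 else 0)"
    by (simp add: axis_def)
  have monoline: "mono (\<lambda>t. f (x + t *\<^sub>R axis j 1) $ i)" for x j i
    by (rule monoI, rule mon) (auto simp: ax)
  show ?thesis
  proof (rule set_eqI, clarify)
    fix i j
    show "((i, j) \<in> graph_G f) = ((i, j) \<in> graph_Gs f)"
    proof
      assume G: "(i, j) \<in> graph_G f"
      show "(i, j) \<in> graph_Gs f"
      proof (unfold graph_Gs_def, clarify)
        fix h assume hh: "\<forall>x. f x $ i = h (restrict (\<lambda>k. x $ k) (- {j}))"
        have "f (u *\<^sub>R axis j 1) $ i = f 0 $ i" for u
        proof -
          have "restrict (\<lambda>k. (u *\<^sub>R axis j 1) $ k) (- {j}) = restrict (\<lambda>k. (0::real^'n) $ k) (- {j})"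
            by (auto simp: restrict_def ax)
          thus ?thesis using hh by metis
        qed
        with G have "filterlim (\<lambda>u::real. f 0 $ i) at_top at_top"
          unfolding graph_G_def by simp
        thus False by (simp add: filterlim_at_top eventually_at_top_linorder)
           (meson gt_ex linorder_not_le order.refl)
      qed
    next
      assume Gs: "(i, j) \<in> graph_Gs f"
      show "(i, j) \<in> graph_G f"
      proof (rule ccontr)
        assume nG: "(i, j) \<notin> graph_G f"
        define \<phi> where "\<phi> u = f (u *\<^sub>R axis j 1) $ i" for u
        have mphi: "mono \<phi>" using monoline[of 0 j i] unfolding \<phi>_def by simp
        obtain Z where Z: "\<And>u. \<phi> u < Z"
        proof -
          from nG obtain Z where nev: "\<not> eventually (\<lambda>u. Z \<le> \<phi> u) at_top"
            unfolding graph_G_def filterlim_at_top \<phi>_def by auto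
          have "\<phi> u < Z" for u
          proof (rule ccontr)
            assume "\<not> \<phi> u < Z"
            hence "\<forall>v\<ge>u. Z \<le> \<phi> v" using mphi by (meson monoD not_le order_trans)
            with nev show False by (auto simp: eventually_at_top_linorder)
          qed
          thus ?thesis using that by blast
        qed
        have indep: "f x $ i = f (\<chi> k. if k = j then 0 else x $ k) $ i" for x
        proof -
          define x0 :: "real^'n" where "x0 = (\<chi> k. if k = j then 0 else x $ k)"
          define c where "c = (\<Sum>k\<in>UNIV. \<bar>x $ k\<bar>)"
          define \<psi> where "\<psi> t = f (x0 + t *\<^sub>R axis j 1) $ i" for t
          have cpsi: "convex_on UNIV \<psi>" unfolding \<psi>_def by (rule convex_line[OF cvx])
          have mpsi: "mono \<psi>" unfolding \<psi>_def by (rule monoline)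
          have xk: "\<bar>x $ k\<bar> \<le> c" for k
            unfolding c_def by (rule member_le_sum) auto
          have c0: "0 \<le> c" unfolding c_def by (rule sum_nonneg) auto
          have bpsi: "\<psi> t \<le> Z + c" for t
          proof -
            have "\<psi> t \<le> f (t *\<^sub>R axis j 1 + (\<chi> k. c)) $ i"
              unfolding \<psi>_def
              apply (rule mon)
              apply (rule allI)
              subgoal for k
              proof (cases "k = j")
                case True thus ?thesis using c0 by (simp add: x0_def ax)
              next
                case False
                have "x $ k \<le> c" using xk[of k] by linarith
                thus ?thesis using False by (simp add: x0_def ax)
              qed
              done
            also have "\<dots> = \<phi> t + c" unfolding \<phi>_def by (simp add: hom)
            finally show ?thesis using Z[of t] by simp
          qed
          have "\<psi> (x $ j) = \<psi> 0" by (rule cvx_mono_bdd_const[OF cpsi mpsi bpsi])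
          moreover have "x0 + (x $ j) *\<^sub>R axis j 1 = x"
            by (simp add: vec_eq_iff x0_def ax)
          ultimately show ?thesis unfolding \<psi>_def x0_def by simp
        qed
        have "\<exists>h :: ('n \<Rightarrow> real) \<Rightarrow> real. \<forall>x. f x $ i = h (restrict (\<lambda>k. x $ k) (- {j}))"
        proof (rule exI[of _ "\<lambda>r. f (\<chi> k. if k = j then 0 else r k) $ i"], rule allI)
          fix x :: "real^'n"
          have "(\<chi> k. if k = j then 0 else restrict (\<lambda>k. x $ k) (- {j}) k) = (\<chi> k. if k = j then 0 else x $ k)"
            by (simp add: vec_eq_iff restrict_def)
          thus "f x $ i = f (\<chi> k. if k = j then 0 else restrict (\<lambda>k. x $ k) (- {j}) k) $ i"
            using indep[of x] by simp
        qed
        with Gs show False unfolding graph_Gs_def by blast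
      qed
    qed
  qed
qed

end
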